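(* Let $C(r)=(x(r),y(r))$ be a real-analytic regular parameterization of a convex plane arc, extended holomorphically to a complex neighbourhood of its real parameter interval. For real $s,t$ with $t>0$ such that $s\pm t$ and $s\pm it$ lie in that neighbourhood, put $p(s,t)=\tfrac12(C(s+t)+C(s-t))$ and $$f(s,t)=\tfrac14\int_{s-t}^{s+t}[C(r)-p(s,t),C'(r)]\,dr,$$ so that $f(s,t)$ is the inner area distance at $p(s,t)$, and let $f(s,it)$ denote its holomorphic continuation in the second variable (the integral taken along the segment from $s-it$ to $s+it$). Set $P(s,t)=\tfrac12(C(s+it)+C(s-it))$ and $F(s,t)=i\,f(s,it)$. Then $F(s,t)$ is real, and, writing $G(s,t)=\tfrac{i}{2}R\big(C(s+it)-C(s-it)\big)$ (a real vector), one has $F_s=\langle G,P_s\rangle$ and $F_t=\langle G,P_t\rangle$; that is, regarded as a function of the planar point $P$, $\nabla F=iR\big(\tfrac{C(z)-C(\overline{z})}{2}\big)$ with $z=s+it$.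
   Context: $[X,Y]$ denotes the determinant of the $2\times2$ matrix with columns $X,Y$, extended bilinearly to complex vectors; $R$ is the counterclockwise rotation by ninety degrees, $R(a,b)=(-b,a)$. The curve is oriented so that, for the inner area distance, the minimal chord through $p(s,t)$ has extremities $C(s-t)$, $C(s+t)$ and the formula for $f(s,t)$ above holds. *)

theory Defs
  imports "HOL-Complex_Analysis.Complex_Analysis"
begin

definition det2 :: "complex \<times> complex \<Rightarrow> complex \<times> complex \<Rightarrow> complex" where
  "det2 X Y = fst X * snd Y - snd X * fst Y"

definition rot90 :: "complex \<times> complex \<Rightarrow> complex \<times> complex" where
  "rot90 X = (- snd X, fst X)"

text \<open>The curve C = (x,y) as a pair of holomorphic functions.  Regularity and
 convexity of the real arc C restricted to [a,b]: the arc lies (weakly) on one side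
 of each of its tangent lines.\<close>
definition regular_arc :: "(complex \<Rightarrow> complex) \<Rightarrow> (complex \<Rightarrow> complex) \<Rightarrow> real \<Rightarrow> real \<Rightarrow> bool" where
  "regular_arc x y a b \<longleftrightarrow>
     (\<forall>r\<in>{a..b}. (deriv x (of_real r), deriv y (of_real r)) \<noteq> (0, 0))"

definition convex_arc :: "(complex \<Rightarrow> complex) \<Rightarrow> (complex \<Rightarrow> complex) \<Rightarrow> real \<Rightarrow> real \<Rightarrow> bool" where
  "convex_arc x y a b \<longleftrightarrow>
     (\<forall>r\<in>{a..b}.
        (\<forall>r'\<in>{a..b}. Re (det2 (x (of_real r') - x (of_real r), y (of_real r') - y (of_real r))
                                (deriv x (of_real r), deriv y (of_real r))) \<ge> 0)
      \<or> (\<forall>r'\<in>{a..b}. Re (det2 (x (of_real r') - x (of_real r), y (of_real r') - y (of_real r))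
                                (deriv x (of_real r), deriv y (of_real r))) \<le> 0))"

text \<open>f(s,w) = 1/4 \<integral>_{s-w}^{s+w} [C(r) - p, C'(r)] dr along the segment from s-w to s+w,
 with p = (C(s+w) + C(s-w))/2.  For real w = t this is the inner area distance;
 for w = i t it is the holomorphic continuation f(s,it).\<close>
definition area_f :: "(complex \<Rightarrow> complex) \<Rightarrow> (complex \<Rightarrow> complex) \<Rightarrow> real \<Rightarrow> complex \<Rightarrow> complex" where
  "area_f x y s w =
     (let px = (x (of_real s + w) + x (of_real s - w)) / 2;
          py = (y (of_real s + w) + y (of_real s - w)) / 2
      in contour_integral (linepath (of_real s - w) (of_real s + w))
           (\<lambda>r. det2 (x r - px, y r - py) (deriv x r, deriv y r)) / 4)"

definition bigF :: "(complex \<Rightarrow> complex) \<Rightarrow> (complex \<Rightarrow> complex) \<Rightarrow> real \<Rightarrow> real \<Rightarrow> complex" where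
  "bigF x y s t = \<i> * area_f x y s (\<i> * of_real t)"

definition bigP :: "(complex \<Rightarrow> complex) \<Rightarrow> (complex \<Rightarrow> complex) \<Rightarrow> real \<Rightarrow> real \<Rightarrow> complex \<times> complex" where
  "bigP x y s t =
     ((x (Complex s t) + x (Complex s (-t))) / 2, (y (Complex s t) + y (Complex s (-t))) / 2)"

definition bigG :: "(complex \<Rightarrow> complex) \<Rightarrow> (complex \<Rightarrow> complex) \<Rightarrow> real \<Rightarrow> real \<Rightarrow> complex \<times> complex" where
  "bigG x y s t =
     (let R = rot90 (x (Complex s t) - x (Complex s (-t)), y (Complex s t) - y (Complex s (-t)))
      in (\<i> / 2 * fst R, \<i> / 2 * snd R))"

definition pair2 :: "complex \<times> complex \<Rightarrow> complex \<times> complex \<Rightarrow> complex" where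
  "pair2 X Y = fst X * fst Y + snd X * snd Y"

end

theory Submission imports Defs begin


lemma dS:
  assumes "(h has_field_derivative D) (at (Complex s c))"
  shows "((\<lambda>\<sigma>. h (Complex \<sigma> c)) has_vector_derivative D) (at s)"
proof -
  have e: "(\<lambda>\<sigma>. Complex \<sigma> c) = (\<lambda>\<sigma>. of_real \<sigma> + Complex 0 c)"
    by (auto simp: complex_eq_iff)
  have "((\<lambda>\<sigma>. Complex \<sigma> c) has_vector_derivative 1) (at s)"
    unfolding e by (auto intro!: derivative_eq_intros)
  from field_vector_diff_chain_at[OF this, of h D] assms show ?thesis
    by (simp add: o_def)
qed

lemma dT:
  assumes "(h has_field_derivative D) (at (Complex c t))"
  shows "((\<lambda>\<tau>. h (Complex c \<tau>)) has_vector_derivative \<i> * D) (at t)"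
proof -
  have e: "(\<lambda>\<tau>. Complex c \<tau>) = (\<lambda>\<tau>. of_real c + \<i> * of_real \<tau>)"
    by (auto simp: complex_eq_iff)
  have "((\<lambda>\<tau>. Complex c \<tau>) has_vector_derivative \<i>) (at t)"
    unfolding e by (auto intro!: derivative_eq_intros)
  from field_vector_diff_chain_at[OF this, of h D] assms show ?thesis
    by (simp add: o_def)
qed

lemma dTm:
  assumes "(h has_field_derivative D) (at (Complex c (-t)))"
  shows "((\<lambda>\<tau>. h (Complex c (-\<tau>))) has_vector_derivative - \<i> * D) (at t)"
proof -
  have e: "(\<lambda>\<tau>. Complex c (-\<tau>)) = (\<lambda>\<tau>. of_real c - \<i> * of_real \<tau>)"
    by (auto simp: complex_eq_iff)
  have "((\<lambda>\<tau>. Complex c (-\<tau>)) has_vector_derivative - \<i>) (at t)"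
    unfolding e by (auto intro!: derivative_eq_intros)
  from field_vector_diff_chain_at[OF this, of h D] assms show ?thesis
    by (simp add: o_def)
qed

lemma reflect:
  fixes x :: "complex \<Rightarrow> complex"
  assumes "open U" "connected U" "cnj ` U = U" "a < b" "of_real ` {a..b} \<subseteq> U"
    "x holomorphic_on U" "\<forall>r\<in>{a..b}. x (of_real r) \<in> \<real>" "z \<in> U"
  shows "x (cnj z) = cnj (x z)"
proof -
  have h1: "cnj \<circ> x \<circ> cnj holomorphic_on U"
    by (rule holomorphic_on_compose_cnj_cnj) (use assms in auto)
  have h: "(\<lambda>w. cnj (x (cnj w)) - x w) holomorphic_on U"
    using holomorphic_on_diff[OF h1 assms(6)] by (simp add: o_def)
  have lim: "of_real a islimpt (of_real ` {a..b} :: complex set)"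
    unfolding islimpt_approachable
  proof (intro allI impI)
    fix e :: real assume "e > 0"
    show "\<exists>x'\<in>complex_of_real ` {a..b}. x' \<noteq> complex_of_real a \<and> dist x' (complex_of_real a) < e"
    proof (intro bexI[of _ "complex_of_real (a + min (e/2) (b-a))"] conjI)
      show "dist (complex_of_real (a + min (e / 2) (b - a))) (complex_of_real a) < e"
        unfolding dist_of_real using \<open>e>0\<close> \<open>a<b\<close> by (simp add: dist_real_def)
      show "complex_of_real (a + min (e / 2) (b - a)) \<in> complex_of_real ` {a..b}"
        by (rule imageI) (use \<open>e>0\<close> \<open>a<b\<close> in auto)
    qed (use \<open>e>0\<close> \<open>a<b\<close> in \<open>auto simp: min_def\<close>)
  qed
  have "cnj (x (cnj z)) - x z = 0"
    apply (rule analytic_continuation[OF h assms(1,2,5) _ lim])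
    using assms by (auto simp: Reals_cnj_iff)
  then show ?thesis by (metis complex_cnj_cnj eq_iff_diff_eq_0)
qed

lemma reflect_deriv:
  fixes x :: "complex \<Rightarrow> complex"
  assumes "open U" "connected U" "cnj ` U = U" "a < b" "of_real ` {a..b} \<subseteq> U"
    "x holomorphic_on U" "\<forall>r\<in>{a..b}. x (of_real r) \<in> \<real>" "z \<in> U"
  shows "deriv x (cnj z) = cnj (deriv x z)"
proof -
  have cz: "cnj z \<in> U" using assms(3,8) by force
  have "(x has_field_derivative deriv x z) (at (cnj (cnj z)))"
    using holomorphic_derivI[OF assms(6,1,8)] by simp
  from has_field_derivative_cnj_cnj[OF this]
  have d: "((cnj \<circ> x \<circ> cnj) has_field_derivative cnj (deriv x z)) (at (cnj z))" .
  have eq: "(cnj \<circ> x \<circ> cnj) w = x w" if "w \<in> U" for w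
    using reflect[OF assms(1-7) that] by simp
  have "(x has_field_derivative cnj (deriv x z)) (at (cnj z))"
    by (rule has_field_derivative_transform_within_open[OF d assms(1) cz]) (use eq in simp)
  then show ?thesis by (rule DERIV_imp_deriv)
qed



theorem mainTheorem6:
  fixes x y :: "complex \<Rightarrow> complex" and U :: "complex set" and a b s t :: real
  assumes "open U" and "connected U" and "cnj ` U = U"
    and "a < b" and "of_real ` {a..b} \<subseteq> U"
    and "x holomorphic_on U" and "y holomorphic_on U"
    and "\<forall>r\<in>{a..b}. x (of_real r) \<in> \<real> \<and> y (of_real r) \<in> \<real>"
    and "regular_arc x y a b" and "convex_arc x y a b"
    and "t > 0"
    and "of_real (s + t) \<in> U" and "of_real (s - t) \<in> U"
    and "closed_segment (Complex s (-t)) (Complex s t) \<subseteq> U"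
  shows "bigF x y s t \<in> \<real>
    \<and> fst (bigG x y s t) \<in> \<real> \<and> snd (bigG x y s t) \<in> \<real>
    \<and> ((\<lambda>\<sigma>. bigF x y \<sigma> t) has_vector_derivative
           pair2 (bigG x y s t)
             (vector_derivative (\<lambda>\<sigma>. fst (bigP x y \<sigma> t)) (at s),
              vector_derivative (\<lambda>\<sigma>. snd (bigP x y \<sigma> t)) (at s))) (at s)
    \<and> ((\<lambda>\<tau>. bigF x y s \<tau>) has_vector_derivative
           pair2 (bigG x y s t)
             (vector_derivative (\<lambda>\<tau>. fst (bigP x y s \<tau>)) (at t),
              vector_derivative (\<lambda>\<tau>. snd (bigP x y s \<tau>)) (at t))) (at t)"
proof -
  define K where "K = closed_segment (Complex s (-t)) (Complex s t)"
  have "compact K" by (simp add: K_def compact_segment)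
  then obtain e where e: "e > 0" "(\<Union>k\<in>K. ball k e) \<subseteq> U"
    using compact_subset_open_imp_ball_epsilon_subset[of K U] assms(1,14) K_def by metis
  define d where "d = e/2"
  have d: "d > 0" using e d_def by auto
  define R where "R = {z. s - d < Re z \<and> Re z < s + d \<and> -(t+d) < Im z \<and> Im z < t + d}"
  have RU: "R \<subseteq> U"
  proof
    fix z assume z: "z \<in> R"
    define \<tau> where "\<tau> = max (-t) (min t (Im z))"
    have kK: "Complex s \<tau> \<in> K"
      unfolding K_def in_segment
    proof (intro exI[of _ "(\<tau> + t)/(2*t)"] conjI)
      show "0 \<le> (\<tau> + t) / (2 * t)" using assms(11) by (auto simp: \<tau>_def)
      show "(\<tau> + t) / (2 * t) \<le> 1" using assms(11) by (auto simp: \<tau>_def)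
      show "Complex s \<tau> = (1 - (\<tau> + t) / (2 * t)) *\<^sub>R Complex s (- t) + ((\<tau> + t) / (2 * t)) *\<^sub>R Complex s t"
      proof -
        have "\<tau> = (1 - (\<tau> + t) / (2 * t)) * (-t) + (\<tau> + t) / (2 * t) * t"
          using assms(11) by (simp add: field_simps)
        then show ?thesis unfolding complex_eq_iff by (simp add: algebra_simps)
      qed
    qed
    have "cmod (z - Complex s \<tau>) \<le> \<bar>Re z - s\<bar> + \<bar>Im z - \<tau>\<bar>"
      using cmod_le[of "z - Complex s \<tau>"] by simp
    also have "\<dots> < e" using z d_def by (auto simp: R_def \<tau>_def)
    finally have "z \<in> ball (Complex s \<tau>) e" by (simp add: dist_norm norm_minus_commute)
    then show "z \<in> U" using e kK by blast
  qed
  have openR: "open R" unfolding R_def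
    by (intro open_Collect_conj open_Collect_less continuous_intros)
  have RI: "R = {z. Re z > s - d} \<inter> {z. Re z < s + d} \<inter> {z. Im z > -(t+d)} \<inter> {z. Im z < t + d}"
    by (auto simp: R_def)
  have convR: "convex R" unfolding RI
    by (intro convex_Int convex_halfspace_Re_gt convex_halfspace_Re_lt convex_halfspace_Im_gt convex_halfspace_Im_lt)
  have inR: "Complex \<sigma> \<tau> \<in> R" if "\<bar>\<sigma> - s\<bar> < d" "\<bar>\<tau>\<bar> < t + d" for \<sigma> \<tau>
    using that by (auto simp: R_def)
  have segR: "closed_segment (Complex \<sigma> (-\<tau>)) (Complex \<sigma> \<tau>) \<subseteq> R" if "\<bar>\<sigma> - s\<bar> < d" "\<bar>\<tau>\<bar> < t + d" for \<sigma> \<tau>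
    using that by (intro closed_segment_subset convR inR) auto
  have cnjR: "cnj z \<in> R" if "z \<in> R" for z using that by (auto simp: R_def)

  define g where "g z = x z * deriv y z - y z * deriv x z" for z
  have hx': "deriv x holomorphic_on U" by (intro holomorphic_deriv assms(1,6))
  have hy': "deriv y holomorphic_on U" by (intro holomorphic_deriv assms(1,7))
  have hg: "g holomorphic_on R"
    unfolding g_def[abs_def]
    by (intro holomorphic_on_subset[OF _ RU] holomorphic_on_diff holomorphic_on_mult assms(6,7) hx' hy')
  obtain H where H0: "\<And>z. z \<in> R \<Longrightarrow> (H has_field_derivative g z) (at z within R)"
    using holomorphic_convex_primitive'[OF convR openR hg] by blast
  have H: "(H has_field_derivative g z) (at z)" if "z \<in> R" for z
    using H0[OF that] at_within_open[OF that openR] by simp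
  have Dx: "(x has_field_derivative deriv x z) (at z)" if "z \<in> R" for z
    using holomorphic_derivI[OF assms(6,1)] RU that by blast
  have Dy: "(y has_field_derivative deriv y z) (at z)" if "z \<in> R" for z
    using holomorphic_derivI[OF assms(7,1)] RU that by blast

  define Fe where "Fe \<sigma> \<tau> = \<i> / 4 * (H (Complex \<sigma> \<tau>) - H (Complex \<sigma> (-\<tau>))
      + x (Complex \<sigma> \<tau>) * y (Complex \<sigma> (-\<tau>)) - x (Complex \<sigma> (-\<tau>)) * y (Complex \<sigma> \<tau>))" for \<sigma> \<tau>
  have key: "bigF x y \<sigma> \<tau> = Fe \<sigma> \<tau>" if "\<bar>\<sigma> - s\<bar> < d" "\<bar>\<tau>\<bar> < t + d" for \<sigma> \<tau>
  proof -
    define z1 where "z1 = Complex \<sigma> \<tau>"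
    define z2 where "z2 = Complex \<sigma> (-\<tau>)"
    define px where "px = (x z1 + x z2) / 2"
    define py where "py = (y z1 + y z2) / 2"
    define Q where "Q r = H r - px * y r + py * x r" for r
    have e1: "complex_of_real \<sigma> + \<i> * complex_of_real \<tau> = z1" by (simp add: z1_def complex_eq_iff)
    have e2: "complex_of_real \<sigma> - \<i> * complex_of_real \<tau> = z2" by (simp add: z2_def complex_eq_iff)
    have QD: "(Q has_field_derivative det2 (x r - px, y r - py) (deriv x r, deriv y r)) (at r within R)"
      if "r \<in> R" for r
    proof -
      have eqD: "det2 (x r - px, y r - py) (deriv x r, deriv y r) = g r - px * deriv y r + py * deriv x r"
        by (simp add: det2_def g_def algebra_simps)
      have "(Q has_field_derivative g r - px * deriv y r + py * deriv x r) (at r)"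
        unfolding Q_def[abs_def]
        by (intro DERIV_add DERIV_diff DERIV_cmult H Dx Dy that)
      then show ?thesis unfolding eqD by (rule has_field_derivative_at_within)
    qed
    have "((\<lambda>r. det2 (x r - px, y r - py) (deriv x r, deriv y r)) has_contour_integral
             (Q (pathfinish (linepath z2 z1)) - Q (pathstart (linepath z2 z1)))) (linepath z2 z1)"
      by (rule contour_integral_primitive[OF QD]) (use segR[OF that] in \<open>auto simp: z1_def z2_def\<close>)
    then have ci: "contour_integral (linepath z2 z1) (\<lambda>r. det2 (x r - px, y r - py) (deriv x r, deriv y r))
        = Q z1 - Q z2"
      by (simp add: contour_integral_unique)
    have "bigF x y \<sigma> \<tau> = \<i> * ((Q z1 - Q z2) / 4)"
      unfolding bigF_def area_f_def Let_def e1 e2 using ci by (simp add: px_def py_def)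
    also have "\<dots> = Fe \<sigma> \<tau>"
      unfolding Fe_def Q_def px_def py_def z1_def[symmetric] z2_def[symmetric]
      by (simp add: field_simps)
    finally show ?thesis .
  qed
  have AR: "Complex s t \<in> R" "Complex s (-t) \<in> R"
    using inR[of s t] inR[of s "-t"] d assms(11) by auto
  note dA = H[OF AR(1)] Dx[OF AR(1)] Dy[OF AR(1)]
  note dB = H[OF AR(2)] Dx[OF AR(2)] Dy[OF AR(2)]
  have sA: "((\<lambda>\<sigma>. h (Complex \<sigma> t)) has_vector_derivative D) (at s)"
    if "(h has_field_derivative D) (at (Complex s t))" for h D using that by (rule dS)
  have sB: "((\<lambda>\<sigma>. h (Complex \<sigma> (-t))) has_vector_derivative D) (at s)"
    if "(h has_field_derivative D) (at (Complex s (-t)))" for h D using that by (rule dS)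
  have tA: "((\<lambda>\<tau>. h (Complex s \<tau>)) has_vector_derivative \<i> * D) (at t)"
    if "(h has_field_derivative D) (at (Complex s t))" for h D using that by (rule dT)
  have tB: "((\<lambda>\<tau>. h (Complex s (-\<tau>))) has_vector_derivative - \<i> * D) (at t)"
    if "(h has_field_derivative D) (at (Complex s (-t)))" for h D using that by (rule dTm)
  note sAB = sA[OF dA(1)] sA[OF dA(2)] sA[OF dA(3)] sB[OF dB(1)] sB[OF dB(2)] sB[OF dB(3)]
  note tAB = tA[OF dA(1)] tA[OF dA(2)] tA[OF dA(3)] tB[OF dB(1)] tB[OF dB(2)] tB[OF dB(3)]
  define x1 where "x1 = x (Complex s t)"
  define x2 where "x2 = x (Complex s (-t))"
  define y1 where "y1 = y (Complex s t)"
  define y2 where "y2 = y (Complex s (-t))"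
  define x1' where "x1' = deriv x (Complex s t)"
  define x2' where "x2' = deriv x (Complex s (-t))"
  define y1' where "y1' = deriv y (Complex s t)"
  define y2' where "y2' = deriv y (Complex s (-t))"
  have G: "bigG x y s t = (\<i>/2 * - (y1 - y2), \<i>/2 * (x1 - x2))"
    by (simp add: bigG_def rot90_def Let_def x1_def x2_def y1_def y2_def)
  have vs1: "vector_derivative (\<lambda>\<sigma>. fst (bigP x y \<sigma> t)) (at s) = (1/2) * (x1' + x2')"
  proof -
    have "((\<lambda>\<sigma>. (1/2) * (x (Complex \<sigma> t) + x (Complex \<sigma> (-t)))) has_vector_derivative (1/2) * (x1' + x2')) (at s)"
      unfolding x1'_def x2'_def by (intro has_vector_derivative_mult_right has_vector_derivative_add sAB)
    moreover have "(\<lambda>\<sigma>. fst (bigP x y \<sigma> t)) = (\<lambda>\<sigma>. (1/2) * (x (Complex \<sigma> t) + x (Complex \<sigma> (-t))))"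
      by (simp add: bigP_def fun_eq_iff)
    ultimately show ?thesis by (simp add: vector_derivative_at)
  qed
  have vs2: "vector_derivative (\<lambda>\<sigma>. snd (bigP x y \<sigma> t)) (at s) = (1/2) * (y1' + y2')"
  proof -
    have "((\<lambda>\<sigma>. (1/2) * (y (Complex \<sigma> t) + y (Complex \<sigma> (-t)))) has_vector_derivative (1/2) * (y1' + y2')) (at s)"
      unfolding y1'_def y2'_def by (intro has_vector_derivative_mult_right has_vector_derivative_add sAB)
    moreover have "(\<lambda>\<sigma>. snd (bigP x y \<sigma> t)) = (\<lambda>\<sigma>. (1/2) * (y (Complex \<sigma> t) + y (Complex \<sigma> (-t))))"
      by (simp add: bigP_def fun_eq_iff)
    ultimately show ?thesis by (simp add: vector_derivative_at)
  qed
  have vt1: "vector_derivative (\<lambda>\<tau>. fst (bigP x y s \<tau>)) (at t) = (1/2) * (\<i> * x1' + - \<i> * x2')"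
  proof -
    have "((\<lambda>\<tau>. (1/2) * (x (Complex s \<tau>) + x (Complex s (-\<tau>)))) has_vector_derivative (1/2) * (\<i> * x1' + - \<i> * x2')) (at t)"
      unfolding x1'_def x2'_def by (intro has_vector_derivative_mult_right has_vector_derivative_add tAB)
    moreover have "(\<lambda>\<tau>. fst (bigP x y s \<tau>)) = (\<lambda>\<tau>. (1/2) * (x (Complex s \<tau>) + x (Complex s (-\<tau>))))"
      by (simp add: bigP_def fun_eq_iff)
    ultimately show ?thesis by (simp add: vector_derivative_at)
  qed
  have vt2: "vector_derivative (\<lambda>\<tau>. snd (bigP x y s \<tau>)) (at t) = (1/2) * (\<i> * y1' + - \<i> * y2')"
  proof -
    have "((\<lambda>\<tau>. (1/2) * (y (Complex s \<tau>) + y (Complex s (-\<tau>)))) has_vector_derivative (1/2) * (\<i> * y1' + - \<i> * y2')) (at t)"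
      unfolding y1'_def y2'_def by (intro has_vector_derivative_mult_right has_vector_derivative_add tAB)
    moreover have "(\<lambda>\<tau>. snd (bigP x y s \<tau>)) = (\<lambda>\<tau>. (1/2) * (y (Complex s \<tau>) + y (Complex s (-\<tau>))))"
      by (simp add: bigP_def fun_eq_iff)
    ultimately show ?thesis by (simp add: vector_derivative_at)
  qed
  have dFs: "((\<lambda>\<sigma>. Fe \<sigma> t) has_vector_derivative
      pair2 (bigG x y s t) ((1/2) * (x1' + x2'), (1/2) * (y1' + y2'))) (at s)"
    unfolding Fe_def
    apply (rule has_vector_derivative_eq_rhs)
     apply ((rule has_vector_derivative_mult_right has_vector_derivative_add has_vector_derivative_diff
        has_vector_derivative_mult sAB)+)
    unfolding G pair2_def g_def x1_def x2_def y1_def y2_def x1'_def x2'_def y1'_def y2'_def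
    by (simp add: algebra_simps)
  have dFt: "((\<lambda>\<tau>. Fe s \<tau>) has_vector_derivative
      pair2 (bigG x y s t) ((1/2) * (\<i> * x1' + - \<i> * x2'), (1/2) * (\<i> * y1' + - \<i> * y2'))) (at t)"
    unfolding Fe_def
    apply (rule has_vector_derivative_eq_rhs)
     apply ((rule has_vector_derivative_mult_right has_vector_derivative_add has_vector_derivative_diff
        has_vector_derivative_mult tAB)+)
    unfolding G pair2_def g_def x1_def x2_def y1_def y2_def x1'_def x2'_def y1'_def y2'_def
    by (simp add: algebra_simps)
  have D1: "((\<lambda>\<sigma>. bigF x y \<sigma> t) has_vector_derivative
      pair2 (bigG x y s t) ((1/2) * (x1' + x2'), (1/2) * (y1' + y2'))) (at s)"
  proof (rule has_vector_derivative_transform_within_open[OF dFs open_ball])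
    show "s \<in> ball s d" using d by simp
    fix \<sigma> assume "\<sigma> \<in> ball s d"
    then show "Fe \<sigma> t = bigF x y \<sigma> t"
      using key[of \<sigma> t] d assms(11) by (simp add: dist_real_def abs_minus_commute)
  qed
  have D2: "((\<lambda>\<tau>. bigF x y s \<tau>) has_vector_derivative
      pair2 (bigG x y s t) ((1/2) * (\<i> * x1' + - \<i> * x2'), (1/2) * (\<i> * y1' + - \<i> * y2'))) (at t)"
  proof (rule has_vector_derivative_transform_within_open[OF dFt open_ball])
    show "t \<in> ball t d" using d by simp
    fix \<tau> assume "\<tau> \<in> ball t d"
    then show "Fe s \<tau> = bigF x y s \<tau>"
      using key[of s \<tau>] d assms(11) by (simp add: dist_real_def abs_minus_commute abs_if split: if_splits)
  qed
  have rx: "\<forall>r\<in>{a..b}. x (of_real r) \<in> \<real>" and ry: "\<forall>r\<in>{a..b}. y (of_real r) \<in> \<real>"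
    using assms(8) by auto
  note RX = reflect[OF assms(1-5) assms(6) rx] and RY = reflect[OF assms(1-5) assms(7) ry]
  note RX' = reflect_deriv[OF assms(1-5) assms(6) rx] and RY' = reflect_deriv[OF assms(1-5) assms(7) ry]
  have AU: "Complex s t \<in> U" using AR RU by blast
  have cA: "cnj (Complex s t) = Complex s (-t)" "cnj (Complex s (-t)) = Complex s t"
    by (simp_all add: complex_eq_iff)
  have x2c: "x2 = cnj x1" using RX[OF AU] by (simp add: x1_def x2_def cA)
  have y2c: "y2 = cnj y1" using RY[OF AU] by (simp add: y1_def y2_def cA)
  have gc: "g (cnj w) = cnj (g w)" if "w \<in> U" for w
    using RX[OF that] RY[OF that] RX'[OF that] RY'[OF that] by (simp add: g_def)
  have Phi: "((\<lambda>w. cnj (H (cnj w)) - H w) has_field_derivative 0) (at w within R)" if "w \<in> R" for w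
  proof -
    have "(H has_field_derivative g (cnj w)) (at (cnj w))" using H[OF cnjR[OF that]] .
    from has_field_derivative_cnj_cnj[OF this]
    have "((\<lambda>w. cnj (H (cnj w))) has_field_derivative g w) (at w)"
      using gc[of w] that RU by (auto simp: o_def)
    from DERIV_diff[OF this H[OF that]] show ?thesis
      by (simp add: has_field_derivative_at_within)
  qed
  obtain c where c: "\<And>w. w \<in> R \<Longrightarrow> cnj (H (cnj w)) - H w = c"
    using has_field_derivative_zero_constant[OF convR Phi] by blast
  have cH1: "cnj (H (Complex s t)) = H (Complex s (-t)) + c"
    using c[OF AR(2)] by (simp add: algebra_simps cA)
  have cH2: "cnj (H (Complex s (-t))) = H (Complex s t) + c"
    using c[OF AR(1)] by (simp add: algebra_simps cA)
  define q where "q = H (Complex s t) - H (Complex s (-t)) + x1 * y2 - x2 * y1"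
  have "cnj q = - q"
    unfolding q_def x2c y2c using cH1 cH2 by (simp add: algebra_simps)
  then have "Re q = 0" by (auto simp: complex_eq_iff)
  have Fs: "bigF x y s t = \<i> / 4 * q"
    using key[of s t] d assms(11) by (simp add: Fe_def q_def x1_def x2_def y1_def y2_def)
  have F_real: "bigF x y s t \<in> \<real>"
    unfolding Fs complex_is_Real_iff using \<open>Re q = 0\<close> by simp
  have G_real: "fst (bigG x y s t) \<in> \<real>" "snd (bigG x y s t) \<in> \<real>"
    unfolding G complex_is_Real_iff x2c y2c by simp_all
  show ?thesis
    using F_real G_real D1 D2 unfolding vs1 vs2 vt1 vt2 by blast
qed

end
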